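(* Let $f:2^V\to\mathbb{Z}_{\ge0}$ be a connectivity function, $W\subseteq V$, and $(C_1,C_2,C_3)$ a minimum $W$-improvement. Then for every set $W'$ such that $W'\subseteq W$ or $W'\subseteq V\setminus W$, and every $i\in\{1,2,3\}$, it holds that $f(W'\cap C_i)\le f(W')$.
   Context: A connectivity function $f:2^V\to\mathbb{Z}_{\ge0}$ ($V$ finite) satisfies $f(\emptyset)=0$, $f(X)=f(V\setminus X)$, and $f(X\cup Y)+f(X\cap Y)\le f(X)+f(Y)$. For $W\subseteq V$, a $W$-improvement is a tripartition $(C_1,C_2,C_3)$ of $V$ (pairwise disjoint, possibly empty, union $V$) with $f(C_i)<f(W)/2$, $f(C_i\cap W)<f(W)$, $f(C_i\cap(V\setminus W))<f(W)$ for each $i$. Its width is $\max_i f(C_i)$, its sum-width is $\sum_i f(C_i)$, and its arity is the number of nonempty $C_i$. A $W$-improvement is minimum if it has minimum width among all $W$-improvements, subject to that minimum arity, and subject to those minimum sum-width. *)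

theory Defs
  imports Main
begin

definition connectivity_function :: "'a set \<Rightarrow> ('a set \<Rightarrow> nat) \<Rightarrow> bool" where
  "connectivity_function V f \<longleftrightarrow> finite V \<and> f {} = 0 \<and>
     (\<forall>X. X \<subseteq> V \<longrightarrow> f X = f (V - X)) \<and>
     (\<forall>X Y. X \<subseteq> V \<longrightarrow> Y \<subseteq> V \<longrightarrow> f (X \<union> Y) + f (X \<inter> Y) \<le> f X + f Y)"

definition tripartition :: "'a set \<Rightarrow> 'a set \<times> 'a set \<times> 'a set \<Rightarrow> bool" where
  "tripartition V C \<longleftrightarrow> (case C of (C1, C2, C3) \<Rightarrow>
     C1 \<inter> C2 = {} \<and> C1 \<inter> C3 = {} \<and> C2 \<inter> C3 = {} \<and> C1 \<union> C2 \<union> C3 = V)"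

text \<open>f(C) < f(W)/2 is written as 2 f(C) < f(W).\<close>
definition improvement :: "'a set \<Rightarrow> ('a set \<Rightarrow> nat) \<Rightarrow> 'a set \<Rightarrow> 'a set \<times> 'a set \<times> 'a set \<Rightarrow> bool" where
  "improvement V f W C \<longleftrightarrow> tripartition V C \<and> (case C of (C1, C2, C3) \<Rightarrow>
     (\<forall>D \<in> {C1, C2, C3}. 2 * f D < f W \<and> f (D \<inter> W) < f W \<and> f (D \<inter> (V - W)) < f W))"

definition width :: "('a set \<Rightarrow> nat) \<Rightarrow> 'a set \<times> 'a set \<times> 'a set \<Rightarrow> nat" where
  "width f C = (case C of (C1, C2, C3) \<Rightarrow> max (f C1) (max (f C2) (f C3)))"

definition sum_width :: "('a set \<Rightarrow> nat) \<Rightarrow> 'a set \<times> 'a set \<times> 'a set \<Rightarrow> nat" where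
  "sum_width f C = (case C of (C1, C2, C3) \<Rightarrow> f C1 + f C2 + f C3)"

definition arity :: "'a set \<times> 'a set \<times> 'a set \<Rightarrow> nat" where
  "arity C = (case C of (C1, C2, C3) \<Rightarrow>
     (if C1 \<noteq> {} then 1 else 0) + (if C2 \<noteq> {} then 1 else 0) + (if C3 \<noteq> {} then 1 else 0))"

definition min_improvement :: "'a set \<Rightarrow> ('a set \<Rightarrow> nat) \<Rightarrow> 'a set \<Rightarrow> 'a set \<times> 'a set \<times> 'a set \<Rightarrow> bool" where
  "min_improvement V f W C \<longleftrightarrow> improvement V f W C \<and>
     (\<forall>D. improvement V f W D \<longrightarrow>
        width f C < width f D \<or>
        (width f C = width f D \<and> (arity C < arity D \<or>
          (arity C = arity D \<and> sum_width f C \<le> sum_width f D))))"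

end

theory Submission
  imports Defs
begin

lemma cf_sub:
  assumes "connectivity_function V f" "X \<subseteq> V" "Y \<subseteq> V"
  shows "f (X \<union> Y) + f (X \<inter> Y) \<le> f X + f Y"
  using assms unfolding connectivity_function_def by blast

lemma cf_sym:
  assumes "connectivity_function V f" "X \<subseteq> V"
  shows "f X = f (V - X)"
  using assms unfolding connectivity_function_def by blast

lemma cf_posi:
  assumes cf: "connectivity_function V f" and XV: "X \<subseteq> V" and YV: "Y \<subseteq> V"
  shows "f (X - Y) + f (Y - X) \<le> f X + f Y"
proof -
  have VY: "V - Y \<subseteq> V" by blast
  have 1: "f (X \<union> (V - Y)) + f (X \<inter> (V - Y)) \<le> f X + f (V - Y)"
    using cf_sub[OF cf XV VY] .
  have 2: "f (V - Y) = f Y" using cf_sym[OF cf YV] by (rule sym)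
  have 3: "X \<inter> (V - Y) = X - Y" using XV by blast
  have XU: "X \<union> (V - Y) \<subseteq> V" using XV by blast
  have 4: "f (X \<union> (V - Y)) = f (V - (X \<union> (V - Y)))" using cf_sym[OF cf XU] .
  have 5: "V - (X \<union> (V - Y)) = Y - X" using YV by blast
  from 1 show ?thesis unfolding 2 3 4 5 by (simp only: add.commute)
qed

lemma imp12: "improvement V f W (C2, C1, C3) = improvement V f W (C1, C2, C3)"
proof -
  have "{C2, C1, C3} = {C1, C2, C3}" by (simp add: insert_commute)
  moreover have "tripartition V (C2, C1, C3) = tripartition V (C1, C2, C3)"
    unfolding tripartition_def by (auto simp: Int_commute)
  ultimately show ?thesis unfolding improvement_def by auto
qed

lemma imp13: "improvement V f W (C3, C2, C1) = improvement V f W (C1, C2, C3)"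
proof -
  have "{C3, C2, C1} = {C1, C2, C3}" by (simp add: insert_commute)
  moreover have "tripartition V (C3, C2, C1) = tripartition V (C1, C2, C3)"
    unfolding tripartition_def by (auto simp: Int_commute)
  ultimately show ?thesis unfolding improvement_def by auto
qed

lemma perm12:
  assumes "min_improvement V f W (C1, C2, C3)" shows "min_improvement V f W (C2, C1, C3)"
proof -
  have "width f (C2, C1, C3) = width f (C1, C2, C3)" unfolding width_def by (simp add: max.left_commute)
  moreover have "arity (C2, C1, C3) = arity (C1, C2, C3)" unfolding arity_def by simp
  moreover have "sum_width f (C2, C1, C3) = sum_width f (C1, C2, C3)" unfolding sum_width_def by simp
  ultimately show ?thesis using assms unfolding min_improvement_def imp12 by simp
qed

lemma perm13:
  assumes "min_improvement V f W (C1, C2, C3)" shows "min_improvement V f W (C3, C2, C1)"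
proof -
  have "width f (C3, C2, C1) = width f (C1, C2, C3)" unfolding width_def by (simp add: max.left_commute max.commute)
  moreover have "arity (C3, C2, C1) = arity (C1, C2, C3)" unfolding arity_def by simp
  moreover have "sum_width f (C3, C2, C1) = sum_width f (C1, C2, C3)" unfolding sum_width_def by simp
  ultimately show ?thesis using assms unfolding min_improvement_def imp13 by simp
qed

lemma core:
  fixes V W W' U C1 C2 C3 :: "'a set" and f :: "'a set \<Rightarrow> nat"
  assumes cf: "connectivity_function V f"
    and WV: "W \<subseteq> V"
    and mi: "min_improvement V f W (C1, C2, C3)"
    and UW: "U = W \<or> U = V - W"
    and W'U: "W' \<subseteq> U"
  shows "f (W' \<inter> C1) \<le> f W'"
proof (rule ccontr)
  assume viol: "\<not> f (W' \<inter> C1) \<le> f W'"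
  have UV: "U \<subseteq> V" using UW WV by blast
  have tri: "C1 \<inter> C2 = {}" "C1 \<inter> C3 = {}" "C2 \<inter> C3 = {}" "C1 \<union> C2 \<union> C3 = V"
    using mi unfolding min_improvement_def improvement_def tripartition_def by auto
  have imp: "\<forall>D \<in> {C1, C2, C3}. 2 * f D < f W \<and> f (D \<inter> W) < f W \<and> f (D \<inter> (V - W)) < f W"
    using mi unfolding min_improvement_def improvement_def by auto
  have minD: "\<And>D. improvement V f W D \<Longrightarrow>
        width f (C1, C2, C3) < width f D \<or>
        (width f (C1, C2, C3) = width f D \<and> (arity (C1, C2, C3) < arity D \<or>
          (arity (C1, C2, C3) = arity D \<and> sum_width f (C1, C2, C3) \<le> sum_width f D)))"
    using mi unfolding min_improvement_def by blast
  have equiv: "(f (D \<inter> U) < f W \<and> f (D \<inter> (V - U)) < f W) \<longleftrightarrow>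
               (f (D \<inter> W) < f W \<and> f (D \<inter> (V - W)) < f W)" if "D \<subseteq> V" for D
  proof (cases "U = W")
    case True then show ?thesis by simp
  next
    case False
    then have "U = V - W" using UW by blast
    moreover have "D \<inter> (V - (V - W)) = D \<inter> W" using that WV by blast
    ultimately show ?thesis by auto
  qed
  have C1V: "C1 \<subseteq> V" and C2V: "C2 \<subseteq> V" and C3V: "C3 \<subseteq> V" using tri by auto
  have impU: "\<forall>D \<in> {C1, C2, C3}. 2 * f D < f W \<and> f (D \<inter> U) < f W \<and> f (D \<inter> (V - U)) < f W"
    using imp equiv C1V C2V C3V by blast
  define S where "S = {X. W' \<inter> C1 \<subseteq> X \<and> X \<subseteq> W'}"
  have W'S: "W' \<in> S" unfolding S_def by blast
  define m where "m = (LEAST n. \<exists>X\<in>S. f X = n)"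
  have "\<exists>X\<in>S. f X = m" unfolding m_def by (rule LeastI_ex) (use W'S in blast)
  then obtain X where XS: "X \<in> S" and fXm: "f X = m" by blast
  have Xmin: "\<And>Y. Y \<in> S \<Longrightarrow> f X \<le> f Y"
    unfolding fXm m_def by (rule Least_le) blast
  have XW': "X \<subseteq> W'" and X1: "W' \<inter> C1 \<subseteq> X" using XS unfolding S_def by auto
  have XU: "X \<subseteq> U" using XW' W'U by blast
  have XV: "X \<subseteq> V" using XU UV by blast
  have fXW': "f X \<le> f W'" using Xmin W'S by blast
  have C1X: "C1 \<inter> X = W' \<inter> C1" using XW' X1 by blast
  have C1ne: "C1 \<noteq> {}"
  proof
    assume "C1 = {}"
    then have "f (W' \<inter> C1) = 0" using cf unfolding connectivity_function_def by simp
    then show False using viol by simp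
  qed
  define A where "A = C1 \<union> X"
  define B where "B = C2 - X"
  define D where "D = C3 - X"
  have fA: "f A < f C1"
    using cf_sub[OF cf C1V XV] C1X fXW' viol unfolding A_def by simp
  have fB: "f B \<le> f C2"
  proof -
    have "X - C2 \<in> S" using XS tri unfolding S_def by blast
    then have "f X \<le> f (X - C2)" by (rule Xmin)
    then show ?thesis using cf_posi[OF cf C2V XV] unfolding B_def by simp
  qed
  have fD: "f D \<le> f C3"
  proof -
    have "X - C3 \<in> S" using XS tri unfolding S_def by blast
    then have "f X \<le> f (X - C3)" by (rule Xmin)
    then show ?thesis using cf_posi[OF cf C3V XV] unfolding D_def by simp
  qed
  have AU: "f (A \<inter> U) < f W"
  proof -
    have C1UV: "C1 \<inter> U \<subseteq> V" using C1V by blast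
    have "A \<inter> U = (C1 \<inter> U) \<union> X" unfolding A_def using XU by blast
    moreover have "(C1 \<inter> U) \<inter> X = W' \<inter> C1" using C1X XU by blast
    ultimately have "f (A \<inter> U) < f (C1 \<inter> U)"
      using cf_sub[OF cf C1UV XV] fXW' viol by simp
    then show ?thesis using impU by auto
  qed
  have AVU: "A \<inter> (V - U) = C1 \<inter> (V - U)" unfolding A_def using XU by blast
  have BU: "f (B \<inter> U) \<le> f (C2 \<inter> U)"
  proof -
    have C2UV: "C2 \<inter> U \<subseteq> V" using C2V by blast
    have "X - (C2 \<inter> U) = X - C2" using XU by blast
    moreover have "X - C2 \<in> S" using XS tri unfolding S_def by blast
    ultimately have "f X \<le> f (X - (C2 \<inter> U))" using Xmin by simp
    moreover have "B \<inter> U = (C2 \<inter> U) - X" unfolding B_def by blast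
    ultimately show ?thesis using cf_posi[OF cf C2UV XV] by simp
  qed
  have BVU: "B \<inter> (V - U) = C2 \<inter> (V - U)" unfolding B_def using XU by blast
  have DU: "f (D \<inter> U) \<le> f (C3 \<inter> U)"
  proof -
    have C3UV: "C3 \<inter> U \<subseteq> V" using C3V by blast
    have "X - (C3 \<inter> U) = X - C3" using XU by blast
    moreover have "X - C3 \<in> S" using XS tri unfolding S_def by blast
    ultimately have "f X \<le> f (X - (C3 \<inter> U))" using Xmin by simp
    moreover have "D \<inter> U = (C3 \<inter> U) - X" unfolding D_def by blast
    ultimately show ?thesis using cf_posi[OF cf C3UV XV] by simp
  qed
  have DVU: "D \<inter> (V - U) = C3 \<inter> (V - U)" unfolding D_def using XU by blast
  have AV: "A \<subseteq> V" and BV: "B \<subseteq> V" and DV: "D \<subseteq> V"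
    using C1V C2V C3V XV unfolding A_def B_def D_def by auto
  have trin: "tripartition V (A, B, D)"
    unfolding tripartition_def A_def B_def D_def using tri XV by auto
  have impA: "2 * f A < f W \<and> f (A \<inter> W) < f W \<and> f (A \<inter> (V - W)) < f W"
    using equiv[OF AV] AU AVU impU fA by auto
  have impB: "2 * f B < f W \<and> f (B \<inter> W) < f W \<and> f (B \<inter> (V - W)) < f W"
    using equiv[OF BV] BU BVU impU fB by fastforce
  have impDD: "2 * f D < f W \<and> f (D \<inter> W) < f W \<and> f (D \<inter> (V - W)) < f W"
    using equiv[OF DV] DU DVU impU fD by fastforce
  have newimp: "improvement V f W (A, B, D)"
    unfolding improvement_def using trin impA impB impDD by auto
  have w: "width f (A, B, D) \<le> width f (C1, C2, C3)"
    unfolding width_def using fA fB fD by auto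
  have ar: "arity (A, B, D) \<le> arity (C1, C2, C3)"
    unfolding arity_def using C1ne unfolding A_def B_def D_def by auto
  have sw: "sum_width f (A, B, D) < sum_width f (C1, C2, C3)"
    unfolding sum_width_def using fA fB fD by auto
  show False using minD[OF newimp] w ar sw by linarith
qed

theorem lemma2:
  fixes V W W' C1 C2 C3 :: "'a set" and f :: "'a set \<Rightarrow> nat"
  assumes "connectivity_function V f"
    and "W \<subseteq> V"
    and "min_improvement V f W (C1, C2, C3)"
    and "W' \<subseteq> W \<or> W' \<subseteq> V - W"
  shows "\<forall>C \<in> {C1, C2, C3}. f (W' \<inter> C) \<le> f W'"
proof -
  obtain U where UW: "U = W \<or> U = V - W" and W'U: "W' \<subseteq> U" using assms(4) by blast
  have 1: "f (W' \<inter> C1) \<le> f W'" using core[OF assms(1,2,3) UW W'U] .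
  have 2: "f (W' \<inter> C2) \<le> f W'" using core[OF assms(1,2) perm12[OF assms(3)] UW W'U] .
  have 3: "f (W' \<inter> C3) \<le> f W'" using core[OF assms(1,2) perm13[OF assms(3)] UW W'U] .
  show ?thesis using 1 2 3 by blast
qed

end
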